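(* Let $\mathfrak p=(p,q)$ with $p$ odd and $q$ divisible by four, and $\Gamma=\Gamma_{\mathfrak p}$. Then $0\in\operatorname{int}B_j^\Gamma$ for some $1\le j\le pq$.
   Context: For $r\ge3$ and $\theta\in\mathbb R$, $\Delta_\theta^r\in\mathbb C^{r\times r}$ is the Hermitian matrix with $1$ on the sub- and superdiagonals, $0$ on the diagonal, entry $e^{-i\theta}$ in position $(1,r)$ and $e^{i\theta}$ in position $(r,1)$, all other entries $0$; $\Delta_\theta^1=2\cos\theta$, $\Delta_\theta^2=\begin{bmatrix}0&1+e^{-i\theta}\\1+e^{i\theta}&0\end{bmatrix}$. $\Gamma_{\mathfrak p}=([0,p)\times[0,q))\cap\mathbb Z^2$, $\Delta^{\Gamma}_{\theta,\varphi}=\Delta_\theta^p\otimes I_q+I_p\otimes\Delta_\varphi^q$, with eigenvalues $\lambda_1^\Gamma(\theta,\varphi)\le\cdots\le\lambda_{pq}^\Gamma(\theta,\varphi)$ counted with multiplicity, and bands $B_j^\Gamma=\{\lambda_j^\Gamma(\theta,\varphi):(\theta,\varphi)\in[0,\pi]^2\}$. *)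

theory Defs
  imports "HOL-Analysis.Analysis" "Jordan_Normal_Form.Char_Poly"
begin

definition Delta :: "nat \<Rightarrow> real \<Rightarrow> complex mat" where
  "Delta r \<theta> =
    (if r = 1 then mat 1 1 (\<lambda>_. complex_of_real (2 * cos \<theta>))
     else if r = 2 then mat 2 2 (\<lambda>(i,j).
        if i = 0 \<and> j = 1 then 1 + exp (- \<i> * complex_of_real \<theta>)
        else if i = 1 \<and> j = 0 then 1 + exp (\<i> * complex_of_real \<theta>)
        else 0)
     else mat r r (\<lambda>(i,j).
        if i + 1 = j \<or> j + 1 = i then 1
        else if i = 0 \<and> j = r - 1 then exp (- \<i> * complex_of_real \<theta>)
        else if i = r - 1 \<and> j = 0 then exp (\<i> * complex_of_real \<theta>)
        else 0))"

definition kron :: "complex mat \<Rightarrow> complex mat \<Rightarrow> complex mat" where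
  "kron A B = mat (dim_row A * dim_row B) (dim_col A * dim_col B)
     (\<lambda>(i,j). A $$ (i div dim_row B, j div dim_col B) * B $$ (i mod dim_row B, j mod dim_col B))"

definition DeltaGamma :: "nat \<Rightarrow> nat \<Rightarrow> real \<Rightarrow> real \<Rightarrow> complex mat" where
  "DeltaGamma p q \<theta> \<phi> = kron (Delta p \<theta>) (1\<^sub>m q) + kron (1\<^sub>m p) (Delta q \<phi>)"

text \<open>Eigenvalues (of a Hermitian matrix) counted with multiplicity, sorted increasingly.\<close>
definition eigs :: "complex mat \<Rightarrow> real list" where
  "eigs A = sorted_list_of_multiset (image_mset Re (proots (char_poly A)))"

definition lam :: "nat \<Rightarrow> nat \<Rightarrow> nat \<Rightarrow> real \<Rightarrow> real \<Rightarrow> real" where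
  "lam p q j \<theta> \<phi> = eigs (DeltaGamma p q \<theta> \<phi>) ! (j - 1)"

definition band :: "nat \<Rightarrow> nat \<Rightarrow> nat \<Rightarrow> real set" where
  "band p q j = (\<lambda>(\<theta>, \<phi>). lam p q j \<theta> \<phi>) ` ({0..pi} \<times> {0..pi})"

end

theory Submission
  imports Defs
begin



definition kth :: "real multiset \<Rightarrow> nat \<Rightarrow> real" where
  "kth M j = sorted_list_of_multiset M ! j"

lemma sorted_nth_le_iff:
  fixes xs :: "real list"
  assumes "sorted xs" "j < length xs"
  shows "xs ! j \<le> t \<longleftrightarrow> j < card {i. i < length xs \<and> xs ! i \<le> t}"
proof
  assume h: "xs ! j \<le> t"
  have "{..j} \<subseteq> {i. i < length xs \<and> xs ! i \<le> t}"
    using assms h by (auto intro: order_trans[OF sorted_nth_mono])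
  then have "card {..j} \<le> card {i. i < length xs \<and> xs ! i \<le> t}" by (intro card_mono) auto
  then show "j < card {i. i < length xs \<and> xs ! i \<le> t}" by simp
next
  assume h: "j < card {i. i < length xs \<and> xs ! i \<le> t}"
  show "xs ! j \<le> t"
  proof (rule ccontr)
    assume c: "\<not> xs ! j \<le> t"
    have "{i. i < length xs \<and> xs ! i \<le> t} \<subseteq> {..<j}"
    proof
      fix i assume i: "i \<in> {i. i < length xs \<and> xs ! i \<le> t}"
      show "i \<in> {..<j}"
      proof (rule ccontr)
        assume "i \<notin> {..<j}"
        then have "xs ! j \<le> xs ! i" using i assms by (auto intro: sorted_nth_mono)
        then show False using i c by auto
      qed
    qed
    then have "card {i. i < length xs \<and> xs ! i \<le> t} \<le> card {..<j}" by (intro card_mono) auto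
    then show False using h by simp
  qed
qed

lemma sorted_nth_less_iff:
  fixes xs :: "real list"
  assumes "sorted xs" "j < length xs"
  shows "xs ! j < t \<longleftrightarrow> j < card {i. i < length xs \<and> xs ! i < t}"
proof
  assume h: "xs ! j < t"
  have "{..j} \<subseteq> {i. i < length xs \<and> xs ! i < t}"
    using assms h by (auto intro: le_less_trans[OF sorted_nth_mono])
  then have "card {..j} \<le> card {i. i < length xs \<and> xs ! i < t}" by (intro card_mono) auto
  then show "j < card {i. i < length xs \<and> xs ! i < t}" by simp
next
  assume h: "j < card {i. i < length xs \<and> xs ! i < t}"
  show "xs ! j < t"
  proof (rule ccontr)
    assume c: "\<not> xs ! j < t"
    have "{i. i < length xs \<and> xs ! i < t} \<subseteq> {..<j}"
    proof
      fix i assume i: "i \<in> {i. i < length xs \<and> xs ! i < t}"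
      show "i \<in> {..<j}"
      proof (rule ccontr)
        assume "i \<notin> {..<j}"
        then have "xs ! j \<le> xs ! i" using i assms by (auto intro: sorted_nth_mono)
        then show False using i c by auto
      qed
    qed
    then have "card {i. i < length xs \<and> xs ! i < t} \<le> card {..<j}" by (intro card_mono) auto
    then show False using h by simp
  qed
qed

lemma size_filter_sorted:
  "size (filter_mset P M) = card {i. i < size M \<and> P (sorted_list_of_multiset M ! i)}"
proof -
  let ?xs = "sorted_list_of_multiset M"
  have "size (filter_mset P M) = size (filter_mset P (mset ?xs))" by simp
  also have "\<dots> = length (filter P ?xs)" by (simp only: mset_filter[symmetric] size_mset)
  also have "\<dots> = card {i. i < length ?xs \<and> P (?xs ! i)}" by (rule length_filter_conv_card)
  also have "length ?xs = size M" by (metis size_mset mset_sorted_list_of_multiset)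
  finally show ?thesis .
qed

lemma length_sorted_mset: "length (sorted_list_of_multiset M) = size M"
  by (metis size_mset mset_sorted_list_of_multiset)

lemma kth_le_iff:
  assumes "j < size M"
  shows "kth M j \<le> t \<longleftrightarrow> j < size (filter_mset (\<lambda>x. x \<le> t) M)"
  unfolding kth_def size_filter_sorted
  using sorted_nth_le_iff[of "sorted_list_of_multiset M" j t] assms
  by (simp add: length_sorted_mset)

lemma kth_less_iff:
  assumes "j < size M"
  shows "kth M j < t \<longleftrightarrow> j < size (filter_mset (\<lambda>x. x < t) M)"
  unfolding kth_def size_filter_sorted
  using sorted_nth_less_iff[of "sorted_list_of_multiset M" j t] assms
  by (simp add: length_sorted_mset)

lemma kth_perturb:
  assumes j: "j < size A" and h: "\<And>a. a \<in># A \<Longrightarrow> g' a \<le> g a + e"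
  shows "kth (image_mset g' A) j \<le> kth (image_mset g A) j + e"
proof -
  define t where "t = kth (image_mset g A) j"
  have "j < size (filter_mset (\<lambda>x. x \<le> t) (image_mset g A))"
    using kth_le_iff[of j "image_mset g A" t] j by (simp add: t_def)
  also have "\<dots> = size (filter_mset (\<lambda>a. g a \<le> t) A)"
    by (simp add: filter_mset_image_mset)
  also have "\<dots> \<le> size (filter_mset (\<lambda>a. g' a \<le> t + e) A)"
    by (intro size_mset_mono filter_mset_mono_strong) (auto dest: h)
  also have "\<dots> = size (filter_mset (\<lambda>x. x \<le> t + e) (image_mset g' A))"
    by (simp add: filter_mset_image_mset)
  finally show ?thesis
    using kth_le_iff[of j "image_mset g' A" "t + e"] j by (simp add: t_def)
qed

lemma kth_continuous_on:
  fixes g :: "'a \<Rightarrow> 'b::topological_space \<Rightarrow> real"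
  assumes j: "j < size A" and c: "\<And>a. a \<in># A \<Longrightarrow> continuous_on S (g a)"
  shows "continuous_on S (\<lambda>x. kth (image_mset (\<lambda>a. g a x) A) j)"
  unfolding continuous_on_def
proof (intro ballI)
  fix x assume x: "x \<in> S"
  show "((\<lambda>x. kth (image_mset (\<lambda>a. g a x) A) j) \<longlongrightarrow> kth (image_mset (\<lambda>a. g a x) A) j) (at x within S)"
  proof (rule tendstoI)
    fix e :: real assume e: "e > 0"
    have ev: "\<forall>\<^sub>F y in at x within S. \<forall>a\<in>set_mset A. dist (g a y) (g a x) < e / 2"
    proof (rule eventually_ball_finite)
      show "finite (set_mset A)" by simp
      show "\<forall>a\<in>set_mset A. \<forall>\<^sub>F y in at x within S. dist (g a y) (g a x) < e / 2"
      proof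
        fix a assume a: "a \<in> set_mset A"
        have "(g a \<longlongrightarrow> g a x) (at x within S)"
          using c[OF a] x unfolding continuous_on_def by auto
        then show "\<forall>\<^sub>F y in at x within S. dist (g a y) (g a x) < e / 2"
          using e by (intro tendstoD) auto
      qed
    qed
    show "\<forall>\<^sub>F y in at x within S. dist (kth (image_mset (\<lambda>a. g a y) A) j) (kth (image_mset (\<lambda>a. g a x) A) j) < e"
      using ev
    proof (rule eventually_mono)
      fix y assume hy: "\<forall>a\<in>set_mset A. dist (g a y) (g a x) < e / 2"
      have hb: "\<And>a. a \<in># A \<Longrightarrow> g a y \<le> g a x + e/2 \<and> g a x \<le> g a y + e/2"
      proof -
        fix a assume "a \<in># A"
        then have "dist (g a y) (g a x) < e / 2" using hy by blast
        then show "g a y \<le> g a x + e/2 \<and> g a x \<le> g a y + e/2"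
          unfolding dist_real_def by arith
      qed
      have 1: "kth (image_mset (\<lambda>a. g a y) A) j \<le> kth (image_mset (\<lambda>a. g a x) A) j + e/2"
        by (rule kth_perturb[OF j]) (use hb in auto)
      have 2: "kth (image_mset (\<lambda>a. g a x) A) j \<le> kth (image_mset (\<lambda>a. g a y) A) j + e/2"
        by (rule kth_perturb[OF j]) (use hb in auto)
      show "dist (kth (image_mset (\<lambda>a. g a y) A) j) (kth (image_mset (\<lambda>a. g a x) A) j) < e"
        using 1 2 e by (simp add: dist_real_def abs_less_iff)
    qed
  qed
qed




lemma mult_entry:
  assumes "A \<in> carrier_mat m n" "B \<in> carrier_mat n k" "i < m" "j < k"
  shows "(A * B) $$ (i,j) = (\<Sum>l<n. A $$ (i,l) * B $$ (l,j))"
  using assms by (simp add: scalar_prod_def atLeast0LessThan)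

lemma sum_div_mod_split:
  fixes g :: "nat \<Rightarrow> 'a::comm_monoid_add"
  shows "(\<Sum>j<m*n. g j) = (\<Sum>a<m. \<Sum>b<n. g (a*n+b))"
proof -
  have "(\<Sum>j<m*n. g j) = (\<Sum>a<m. sum g {a*n..<a*n+n})"
    by (rule sum.nat_group[symmetric])
  also have "\<dots> = (\<Sum>a<m. \<Sum>b<n. g (a*n+b))"
  proof (rule sum.cong[OF refl])
    fix a
    show "sum g {a*n..<a*n+n} = (\<Sum>b<n. g (a*n+b))"
      using sum.shift_bounds_nat_ivl[of g 0 "a*n" n]
      by (simp add: atLeast0LessThan add.commute)
  qed
  finally show ?thesis .
qed

lemma lt_mult_mod: "i < m*n \<Longrightarrow> i mod n < (n::nat)"
  by (cases n) auto

lemma lt_mult_div: "i < m*n \<Longrightarrow> i div n < (m::nat)"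
  by (simp add: less_mult_imp_div_less)

lemma kron_carrier:
  "A \<in> carrier_mat m m' \<Longrightarrow> B \<in> carrier_mat n n' \<Longrightarrow> kron A B \<in> carrier_mat (m*n) (m'*n')"
  by (simp add: kron_def)

lemma kron_index:
  "A \<in> carrier_mat m m' \<Longrightarrow> B \<in> carrier_mat n n' \<Longrightarrow> i < m*n \<Longrightarrow> j < m'*n' \<Longrightarrow>
   kron A B $$ (i,j) = A $$ (i div n, j div n') * B $$ (i mod n, j mod n')"
  by (simp add: kron_def)

lemma kron_mult:
  assumes A: "A \<in> carrier_mat m m" and B: "B \<in> carrier_mat n n"
    and X: "X \<in> carrier_mat m m" and Y: "Y \<in> carrier_mat n n" and n: "n > 0"
  shows "kron A B * kron X Y = kron (A*X) (B*Y)"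
proof (rule eq_matI)
  have AX: "A*X \<in> carrier_mat m m" and BY: "B*Y \<in> carrier_mat n n" using A B X Y by auto
  show "dim_row (kron A B * kron X Y) = dim_row (kron (A*X) (B*Y))"
    "dim_col (kron A B * kron X Y) = dim_col (kron (A*X) (B*Y))"
    using A B X Y by (simp_all add: kron_def)
  fix i c assume "i < dim_row (kron (A*X) (B*Y))" "c < dim_col (kron (A*X) (B*Y))"
  then have i: "i < m*n" and c: "c < m*n" using A B X Y by (simp_all add: kron_def)
  have id: "i div n < m" "c div n < m" "i mod n < n" "c mod n < n"
    using i c n by (auto simp: less_mult_imp_div_less)
  have "(kron A B * kron X Y) $$ (i,c) = (\<Sum>j<m*n. kron A B $$ (i,j) * kron X Y $$ (j,c))"
    by (rule mult_entry[OF kron_carrier[OF A B] kron_carrier[OF X Y] i c])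
  also have "\<dots> = (\<Sum>a<m. \<Sum>b<n. kron A B $$ (i,a*n+b) * kron X Y $$ (a*n+b,c))"
    by (rule sum_div_mod_split)
  also have "\<dots> = (\<Sum>a<m. \<Sum>b<n. (A $$ (i div n, a) * X $$ (a, c div n)) * (B $$ (i mod n, b) * Y $$ (b, c mod n)))"
  proof (intro sum.cong refl)
    fix a b assume a: "a \<in> {..<m}" and b: "b \<in> {..<n}"
    have ab: "a*n+b < m*n"
    proof -
      have "a*n+b < a*n+n" using b by simp
      also have "a*n + n = (a+1)*n" by simp
      also have "\<dots> \<le> m*n" using a by (intro mult_right_mono) auto
      finally show ?thesis .
    qed
    have dm: "(a*n+b) div n = a" "(a*n+b) mod n = b" using b by auto
    show "kron A B $$ (i,a*n+b) * kron X Y $$ (a*n+b,c) =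
      (A $$ (i div n, a) * X $$ (a, c div n)) * (B $$ (i mod n, b) * Y $$ (b, c mod n))"
      using kron_index[OF A B i ab] kron_index[OF X Y ab c] dm by (simp add: ac_simps)
  qed
  also have "\<dots> = (\<Sum>a<m. A $$ (i div n, a) * X $$ (a, c div n)) * (\<Sum>b<n. B $$ (i mod n, b) * Y $$ (b, c mod n))"
    by (simp add: sum_product)
  also have "\<dots> = (A*X) $$ (i div n, c div n) * (B*Y) $$ (i mod n, c mod n)"
    using mult_entry[OF A X id(1) id(2)] mult_entry[OF B Y id(3) id(4)] by simp
  also have "\<dots> = kron (A*X) (B*Y) $$ (i,c)"
    using kron_index[OF AX BY i c] by simp
  finally show "(kron A B * kron X Y) $$ (i,c) = kron (A*X) (B*Y) $$ (i,c)" .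
qed

lemma kron_add_left:
  assumes "A \<in> carrier_mat m m'" "A' \<in> carrier_mat m m'" "B \<in> carrier_mat n n'"
  shows "kron (A + A') B = kron A B + kron A' B"
  using assms by (intro eq_matI) (auto simp: kron_def distrib_right lt_mult_mod lt_mult_div)

lemma kron_add_right:
  assumes "A \<in> carrier_mat m m'" "B \<in> carrier_mat n n'" "B' \<in> carrier_mat n n'"
  shows "kron A (B + B') = kron A B + kron A B'"
  using assms by (intro eq_matI) (auto simp: kron_def distrib_left lt_mult_mod lt_mult_div)

lemma kron_one:
  assumes "n > 0"
  shows "kron (1\<^sub>m m) (1\<^sub>m n) = (1\<^sub>m (m*n) :: complex mat)"
proof (rule eq_matI)
  fix i j assume "i < dim_row (1\<^sub>m (m*n) :: complex mat)" "j < dim_col (1\<^sub>m (m*n) :: complex mat)"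
  then have i: "i < m*n" and j: "j < m*n" by auto
  have "(i div n = j div n \<and> i mod n = j mod n) \<longleftrightarrow> i = j"
    by (metis div_mult_mod_eq)
  then show "kron (1\<^sub>m m) (1\<^sub>m n) $$ (i, j) = (1\<^sub>m (m*n) :: complex mat) $$ (i, j)"
    using i j assms by (auto simp: kron_def less_mult_imp_div_less)
qed (auto simp: kron_def)




definition alph :: "nat \<Rightarrow> real \<Rightarrow> nat \<Rightarrow> real" where
  "alph r \<theta> k = (\<theta> + 2*pi*real k) / real r"

definition Vm :: "nat \<Rightarrow> real \<Rightarrow> complex mat" where
  "Vm r \<theta> = mat r r (\<lambda>(j,k). cis (alph r \<theta> k) ^ j)"

definition Wm :: "nat \<Rightarrow> real \<Rightarrow> complex mat" where
  "Wm r \<theta> = mat r r (\<lambda>(k,j). cnj (cis (alph r \<theta> k)) ^ j / of_nat r)"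

definition Dm :: "nat \<Rightarrow> real \<Rightarrow> complex mat" where
  "Dm r \<theta> = mat r r (\<lambda>(i,j). if i = j then complex_of_real (2 * cos (alph r \<theta> i)) else 0)"

lemma Vm_carrier[simp]: "Vm r \<theta> \<in> carrier_mat r r" by (simp add: Vm_def)
lemma Wm_carrier[simp]: "Wm r \<theta> \<in> carrier_mat r r" by (simp add: Wm_def)
lemma Dm_carrier[simp]: "Dm r \<theta> \<in> carrier_mat r r" by (simp add: Dm_def)
lemma Delta_carrier[simp]: "Delta r \<theta> \<in> carrier_mat r r" by (simp add: Delta_def)

lemma cis_root_unity_sum:
  fixes k k' r :: nat
  assumes r: "r > 0" and k: "k < r" and k': "k' < r"
  shows "(\<Sum>j<r. cis (2*pi*(real k' - real k)/real r) ^ j) = (if k = k' then of_nat r else 0)"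
proof (cases "k = k'")
  case True then show ?thesis by simp
next
  case False
  define z where "z = cis (2*pi*(real k' - real k)/real r)"
  have zr: "z ^ r = 1"
  proof -
    have "z ^ r = cis (real r * (2*pi*(real k' - real k)/real r))" unfolding z_def by (rule Complex.DeMoivre)
    also have "real r * (2*pi*(real k' - real k)/real r) = 2 * pi * real_of_int (int k' - int k)"
      using r by simp
    also have "cis \<dots> = 1" by (rule cis_multiple_2pi) simp
    finally show ?thesis .
  qed
  have z1: "z \<noteq> 1"
  proof
    assume "z = 1"
    then have "cos (2*pi*(real k' - real k)/real r) = 1" unfolding z_def
      by (metis Re_complex_of_real cis.sel(1) complex_of_real_def one_complex.sel(1))
    then obtain n :: int where n: "2*pi*(real k' - real k)/real r = of_int n * 2 * pi"
      using cos_one_2pi_int by blast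
    then have "pi * (real k' - real k) = pi * (of_int n * real r)"
      using r by (simp add: field_simps)
    then have "real k' - real k = of_int n * real r"
      using pi_gt_zero by (metis mult_cancel_left pi_neq_zero)
    then have e: "int k' - int k = n * int r"
      by (metis of_int_eq_iff of_int_mult of_int_of_nat_eq of_int_diff)
    have "\<bar>n * int r\<bar> < int r" unfolding e[symmetric] using k k' by auto
    then have "\<bar>n\<bar> * int r < 1 * int r" by (simp add: abs_mult)
    then have "\<bar>n\<bar> < 1" using r by (simp only: mult_less_cancel_right)
    then have "n = 0" by simp
    then show False using e False by simp
  qed
  have "(\<Sum>j<r. z ^ j) = (1 - z^r) / (1 - z)" using z1 by (simp add: sum_gp_strict)
  also have "\<dots> = 0" using zr by simp
  finally show ?thesis using False unfolding z_def by simp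
qed

lemma WV:
  assumes r: "r > 0"
  shows "Wm r \<theta> * Vm r \<theta> = 1\<^sub>m r"
proof (rule eq_matI)
  fix k k' assume "k < dim_row (1\<^sub>m r :: complex mat)" "k' < dim_col (1\<^sub>m r :: complex mat)"
  then have k: "k < r" and k': "k' < r" by auto
  have "(Wm r \<theta> * Vm r \<theta>) $$ (k,k') = (\<Sum>j<r. Wm r \<theta> $$ (k,j) * Vm r \<theta> $$ (j,k'))"
    by (rule mult_entry) (use k k' in auto)
  also have "\<dots> = (\<Sum>j<r. cis (2*pi*(real k' - real k)/real r) ^ j / of_nat r)"
  proof (rule sum.cong[OF refl])
    fix j assume j: "j \<in> {..<r}"
    have "cnj (cis (alph r \<theta> k)) * cis (alph r \<theta> k') = cis (2*pi*(real k' - real k)/real r)"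
    proof -
      have e: "alph r \<theta> k' - alph r \<theta> k = 2*pi*(real k' - real k)/real r"
        unfolding alph_def using r by (simp add: field_simps)
      show ?thesis by (simp add: cis_cnj cis_mult e)
    qed
    then have "cnj (cis (alph r \<theta> k)) ^ j * cis (alph r \<theta> k') ^ j = cis (2*pi*(real k' - real k)/real r) ^ j"
      by (metis power_mult_distrib)
    then show "Wm r \<theta> $$ (k,j) * Vm r \<theta> $$ (j,k') = cis (2*pi*(real k' - real k)/real r) ^ j / of_nat r"
      using j k k' by (simp add: Wm_def Vm_def)
  qed
  also have "\<dots> = (\<Sum>j<r. cis (2*pi*(real k' - real k)/real r) ^ j) / of_nat r"
    by (simp add: sum_divide_distrib)
  also have "\<dots> = (1\<^sub>m r :: complex mat) $$ (k,k')"
    using cis_root_unity_sum[OF r k k'] k k' r by simp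
  finally show "(Wm r \<theta> * Vm r \<theta>) $$ (k,k') = (1\<^sub>m r :: complex mat) $$ (k,k')" .
qed (auto simp: Wm_def Vm_def)

lemma VW:
  assumes r: "r > 0"
  shows "Vm r \<theta> * Wm r \<theta> = 1\<^sub>m r"
  by (rule mat_mult_left_right_inverse[OF Wm_carrier Vm_carrier WV[OF r]])




lemma Delta_entry3:
  assumes r: "3 \<le> r" and i: "i < r" and j: "j < r"
  shows "Delta r \<theta> $$ (i,j) = (if i + 1 = j \<or> j + 1 = i then 1
        else if i = 0 \<and> j = r - 1 then exp (- \<i> * complex_of_real \<theta>)
        else if i = r - 1 \<and> j = 0 then exp (\<i> * complex_of_real \<theta>)
        else 0)"
  using r i j by (simp add: Delta_def)

lemma Delta_row_sum:
  assumes r: "3 \<le> r" and i: "i < r"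
  shows "(\<Sum>j<r. Delta r \<theta> $$ (i,j) * u j) =
     (if i+1 < r then u (i+1) else 0) + (if 0 < i then u (i-1) else 0)
     + (if i = 0 then exp (- \<i> * complex_of_real \<theta>) * u (r-1) else 0)
     + (if i = r-1 then exp (\<i> * complex_of_real \<theta>) * u 0 else 0)"
proof -
  let ?em = "exp (- \<i> * complex_of_real \<theta>)" and ?ep = "exp (\<i> * complex_of_real \<theta>)"
  have "(\<Sum>j<r. Delta r \<theta> $$ (i,j) * u j) = (\<Sum>j<r.
      (if j = i+1 then u j else 0) + (if 0<i then (if j = i-1 then u j else 0) else 0)
      + (if i = 0 then (if j = r-1 then ?em * u j else 0) else 0)
      + (if i = r-1 then (if j = 0 then ?ep * u j else 0) else 0))"
  proof (rule sum.cong[OF refl])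
    fix j assume j: "j \<in> {..<r}"
    then have j: "j < r" by simp
    show "Delta r \<theta> $$ (i,j) * u j =
      (if j = i+1 then u j else 0) + (if 0<i then (if j = i-1 then u j else 0) else 0)
      + (if i = 0 then (if j = r-1 then ?em * u j else 0) else 0)
      + (if i = r-1 then (if j = 0 then ?ep * u j else 0) else 0)"
      unfolding Delta_entry3[OF r i j]
    proof -
      consider "j = i+1" | "j + 1 = i" | "i = 0 \<and> j = r-1" | "i = r-1 \<and> j = 0" 
        | "j \<noteq> i+1" "j + 1 \<noteq> i" "\<not>(i = 0 \<and> j = r-1)" "\<not>(i = r-1 \<and> j = 0)" by blast
      then show "(if i + 1 = j \<or> j + 1 = i then 1 else if i = 0 \<and> j = r - 1 then ?em
          else if i = r - 1 \<and> j = 0 then ?ep else 0) * u j =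
        (if j = i+1 then u j else 0) + (if 0<i then (if j = i-1 then u j else 0) else 0)
        + (if i = 0 then (if j = r-1 then ?em * u j else 0) else 0)
        + (if i = r-1 then (if j = 0 then ?ep * u j else 0) else 0)"
      proof cases
        case 1 then show ?thesis using r i j by auto
      next
        case 2 then show ?thesis using r i j by auto
      next
        case 3 then show ?thesis using r i j by auto
      next
        case 4 then show ?thesis using r i j by auto
      next
        case 5
        then have "\<not> (0 < i \<and> j = i - 1)" by auto
        then show ?thesis using 5 by auto
      qed
    qed
  qed
  also have "\<dots> = (\<Sum>j<r. if j = i+1 then u j else 0) + (\<Sum>j<r. if 0<i then (if j = i-1 then u j else 0) else 0)
      + (\<Sum>j<r. if i = 0 then (if j = r-1 then ?em * u j else 0) else 0)
      + (\<Sum>j<r. if i = r-1 then (if j = 0 then ?ep * u j else 0) else 0)"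
    by (simp only: sum.distrib)
  also have "\<dots> = (if i+1 < r then u (i+1) else 0) + (if 0 < i then u (i-1) else 0)
     + (if i = 0 then ?em * u (r-1) else 0) + (if i = r-1 then ?ep * u 0 else 0)"
    using r i by (simp add: sum.delta' if_distrib[where f="\<lambda>x. sum x _"] cong: if_cong)
  finally show ?thesis .
qed




lemma cos_as_cis: "complex_of_real (2 * cos a) = cis a + inverse (cis a)"
  by (simp add: complex_eq_iff)

lemma Delta_dims[simp]: "dim_row (Delta r \<theta>) = r" "dim_col (Delta r \<theta>) = r"
  by (rule carrier_matD[OF Delta_carrier])+

lemma cis_alph_pow: "r > 0 \<Longrightarrow> cis (alph r \<theta> k) ^ r = cis \<theta>"
proof -
  assume r: "r > 0"
  have "cis (alph r \<theta> k) ^ r = cis (real r * alph r \<theta> k)" by (rule Complex.DeMoivre)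
  also have "real r * alph r \<theta> k = \<theta> + 2 * pi * real k" using r by (simp add: alph_def)
  also have "cis \<dots> = cis \<theta> * cis (2 * pi * real k)" by (rule cis_mult[symmetric])
  also have "cis (2 * pi * real k) = 1" by (rule cis_multiple_2pi) simp
  also have "cis \<theta> * 1 = cis \<theta>" by simp
  finally show ?thesis .
qed

lemma Delta_eig_entry:
  assumes r: "3 \<le> r" and i: "i < r" and k: "k < r"
  shows "(\<Sum>j<r. Delta r \<theta> $$ (i,j) * cis (alph r \<theta> k) ^ j) = cis (alph r \<theta> k) ^ i * complex_of_real (2 * cos (alph r \<theta> k))"
proof -
  define w where "w = cis (alph r \<theta> k)"
  have w0: "w \<noteq> 0" unfolding w_def by (simp add: cis_neq_zero)
  have wr: "w ^ r = cis \<theta>" unfolding w_def using r by (intro cis_alph_pow) auto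
  have ep: "exp (\<i> * complex_of_real \<theta>) = w ^ r" using wr by (simp add: cis_conv_exp mult.commute)
  have em: "exp (- \<i> * complex_of_real \<theta>) = inverse (w ^ r)"
  proof -
    have "exp (- \<i> * complex_of_real \<theta>) = cis (- \<theta>)" by (simp add: cis_conv_exp)
    then show ?thesis using wr by simp
  qed
  define r' where "r' = r - 2"
  have r': "r = Suc (Suc r')" using r unfolding r'_def by simp
  have "(\<Sum>j<r. Delta r \<theta> $$ (i,j) * w ^ j) = 
     (if i+1 < r then w ^ (i+1) else 0) + (if 0 < i then w ^ (i-1) else 0)
     + (if i = 0 then inverse (w ^ r) * w ^ (r-1) else 0)
     + (if i = r-1 then w ^ r * w ^ 0 else 0)"
    using Delta_row_sum[OF r i, of \<theta> "\<lambda>j. w ^ j"] ep em by simp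
  also have "\<dots> = w ^ i * (w + inverse w)"
  proof -
    consider "i = 0" | "0 < i" "i + 1 < r" | "i = r - 1" using i r by linarith
    then show ?thesis
    proof cases
      case 1 then show ?thesis using w0 r' by (simp add: field_simps)
    next
      case 2
      then obtain i' where i': "i = Suc i'" by (cases i) auto
      show ?thesis using 2 w0 r' i' by (simp add: field_simps)
    next
      case 3
      then have "i = Suc r'" using r' by simp
      then show ?thesis using 3 w0 r' by (simp add: field_simps)
    qed
  qed
  moreover have cc: "cis (alph r \<theta> k) + cis (- alph r \<theta> k) = 2 * complex_of_real (cos (alph r \<theta> k))"
    by (simp add: complex_eq_iff)
  ultimately show ?thesis unfolding w_def by simp
qed

lemma Delta_eig:
  assumes r: "r = 1 \<or> 3 \<le> r"
  shows "Delta r \<theta> * Vm r \<theta> = Vm r \<theta> * Dm r \<theta>"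
proof (rule eq_matI)
  fix i k assume "i < dim_row (Vm r \<theta> * Dm r \<theta>)" "k < dim_col (Vm r \<theta> * Dm r \<theta>)"
  then have i: "i < r" and k: "k < r" by (auto simp: Vm_def Dm_def)
  have rhs: "(Vm r \<theta> * Dm r \<theta>) $$ (i,k) = cis (alph r \<theta> k) ^ i * complex_of_real (2 * cos (alph r \<theta> k))"
  proof -
    have "(Vm r \<theta> * Dm r \<theta>) $$ (i,k) = (\<Sum>j<r. Vm r \<theta> $$ (i,j) * Dm r \<theta> $$ (j,k))"
      by (rule mult_entry) (use i k in auto)
    also have "\<dots> = (\<Sum>j<r. if j = k then cis (alph r \<theta> k) ^ i * complex_of_real (2 * cos (alph r \<theta> k)) else 0)"
      by (rule sum.cong[OF refl]) (use i k in \<open>auto simp: Vm_def Dm_def\<close>)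
    also have "\<dots> = cis (alph r \<theta> k) ^ i * complex_of_real (2 * cos (alph r \<theta> k))"
      using k by simp
    finally show ?thesis .
  qed
  have lhs: "(Delta r \<theta> * Vm r \<theta>) $$ (i,k) = (\<Sum>j<r. Delta r \<theta> $$ (i,j) * cis (alph r \<theta> k) ^ j)"
    by (subst mult_entry[of _ r r _ r]) (use i k in \<open>auto simp: Vm_def\<close>)
  show "(Delta r \<theta> * Vm r \<theta>) $$ (i,k) = (Vm r \<theta> * Dm r \<theta>) $$ (i,k)"
    unfolding lhs rhs
  proof (cases "r = 1")
    case True
    then have "i = 0" "k = 0" using i k by auto
    then show "(\<Sum>j<r. Delta r \<theta> $$ (i,j) * cis (alph r \<theta> k) ^ j) = cis (alph r \<theta> k) ^ i * complex_of_real (2 * cos (alph r \<theta> k))"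
      using True by (simp add: Delta_def alph_def)
  next
    case False
    then have "3 \<le> r" using r by auto
    then show "(\<Sum>j<r. Delta r \<theta> $$ (i,j) * cis (alph r \<theta> k) ^ j) = cis (alph r \<theta> k) ^ i * complex_of_real (2 * cos (alph r \<theta> k))"
      by (rule Delta_eig_entry[OF _ i k])
  qed
qed (use Delta_carrier[of r \<theta>] in \<open>auto simp: Vm_def Dm_def\<close>)




definition Fv :: "nat \<Rightarrow> nat \<Rightarrow> real \<Rightarrow> real \<Rightarrow> nat \<Rightarrow> real" where
  "Fv p q \<theta> \<phi> i = 2 * cos (alph p \<theta> (i div q)) + 2 * cos (alph q \<phi> (i mod q))"

lemma VDW_dims[simp]: "dim_row (Vm r \<theta>) = r" "dim_col (Vm r \<theta>) = r"
  "dim_row (Dm r \<theta>) = r" "dim_col (Dm r \<theta>) = r" "dim_row (Wm r \<theta>) = r" "dim_col (Wm r \<theta>) = r"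
  by (simp_all add: Vm_def Dm_def Wm_def)

lemma one_carrier: "(1\<^sub>m n :: complex mat) \<in> carrier_mat n n" by simp

lemma DG_similar:
  fixes \<theta> \<phi> :: real
  assumes p: "p = 1 \<or> 3 \<le> p" and q: "q = 1 \<or> 3 \<le> q"
  defines "U \<equiv> kron (Vm p \<theta>) (Vm q \<phi>)" and "W \<equiv> kron (Wm p \<theta>) (Wm q \<phi>)"
    and "D \<equiv> kron (Dm p \<theta>) (1\<^sub>m q) + kron (1\<^sub>m p) (Dm q \<phi>)"
  shows "similar_mat (DeltaGamma p q \<theta> \<phi>) D"
proof -
  have p0: "p > 0" and q0: "q > 0" using p q by auto
  have U: "U \<in> carrier_mat (p*q) (p*q)" unfolding U_def by (rule kron_carrier) auto
  have W: "W \<in> carrier_mat (p*q) (p*q)" unfolding W_def by (rule kron_carrier) auto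
  have K1: "kron (Delta p \<theta>) (1\<^sub>m q) \<in> carrier_mat (p*q) (p*q)" by (rule kron_carrier) auto
  have K2: "kron (1\<^sub>m p) (Delta q \<phi>) \<in> carrier_mat (p*q) (p*q)" by (rule kron_carrier) auto
  have K3: "kron (Dm p \<theta>) (1\<^sub>m q) \<in> carrier_mat (p*q) (p*q)" by (rule kron_carrier) auto
  have K4: "kron (1\<^sub>m p) (Dm q \<phi>) \<in> carrier_mat (p*q) (p*q)" by (rule kron_carrier) auto
  have DG: "DeltaGamma p q \<theta> \<phi> \<in> carrier_mat (p*q) (p*q)" unfolding DeltaGamma_def using K1 K2 by simp
  have D: "D \<in> carrier_mat (p*q) (p*q)" unfolding D_def using K3 K4 by simp
  have WU: "W * U = 1\<^sub>m (p*q)"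
    unfolding W_def U_def
    by (simp add: kron_mult[OF Wm_carrier Wm_carrier Vm_carrier Vm_carrier q0] WV p0 q0 kron_one)
  have UW: "U * W = 1\<^sub>m (p*q)" by (rule mat_mult_left_right_inverse[OF W U WU])
  have e1: "kron (Delta p \<theta>) (1\<^sub>m q) * U = U * kron (Dm p \<theta>) (1\<^sub>m q)"
  proof -
    have "kron (Delta p \<theta>) (1\<^sub>m q) * U = kron (Delta p \<theta> * Vm p \<theta>) (1\<^sub>m q * Vm q \<phi>)"
      unfolding U_def by (rule kron_mult[OF Delta_carrier one_carrier Vm_carrier Vm_carrier q0])
    also have "\<dots> = kron (Vm p \<theta> * Dm p \<theta>) (Vm q \<phi> * 1\<^sub>m q)"
      using Delta_eig[OF p] by simp
    also have "\<dots> = U * kron (Dm p \<theta>) (1\<^sub>m q)"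
      unfolding U_def by (rule kron_mult[OF Vm_carrier Vm_carrier Dm_carrier one_carrier q0, symmetric])
    finally show ?thesis .
  qed
  have e2: "kron (1\<^sub>m p) (Delta q \<phi>) * U = U * kron (1\<^sub>m p) (Dm q \<phi>)"
  proof -
    have "kron (1\<^sub>m p) (Delta q \<phi>) * U = kron (1\<^sub>m p * Vm p \<theta>) (Delta q \<phi> * Vm q \<phi>)"
      unfolding U_def by (rule kron_mult[OF one_carrier Delta_carrier Vm_carrier Vm_carrier q0])
    also have "\<dots> = kron (Vm p \<theta> * 1\<^sub>m p) (Vm q \<phi> * Dm q \<phi>)"
      using Delta_eig[OF q] by simp
    also have "\<dots> = U * kron (1\<^sub>m p) (Dm q \<phi>)"
      unfolding U_def by (rule kron_mult[OF Vm_carrier Vm_carrier one_carrier Dm_carrier q0, symmetric])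
    finally show ?thesis .
  qed
  have DGU: "DeltaGamma p q \<theta> \<phi> * U = U * D"
    unfolding DeltaGamma_def D_def
    by (simp add: add_mult_distrib_mat[OF K1 K2 U] mult_add_distrib_mat[OF U K3 K4] e1 e2)
  have "DeltaGamma p q \<theta> \<phi> = DeltaGamma p q \<theta> \<phi> * (U * W)" using UW DG by simp
  also have "\<dots> = (DeltaGamma p q \<theta> \<phi> * U) * W" using DG U W by simp
  also have "\<dots> = U * D * W" unfolding DGU ..
  finally have "DeltaGamma p q \<theta> \<phi> = U * D * W" .
  then show ?thesis
    by (intro similar_matI[OF _ UW WU]) (use DG D U W in auto)
qed

lemma sum_list_singletons: "(\<Sum>a\<leftarrow>xs. {#a#}) = mset xs"
  by (induction xs) auto

lemma lam_formula:
  assumes p: "p = 1 \<or> 3 \<le> p" and q: "q = 1 \<or> 3 \<le> q"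
  shows "lam p q j \<theta> \<phi> = kth (image_mset (Fv p q \<theta> \<phi>) (mset [0..<p*q])) (j-1)"
proof -
  define D where "D = kron (Dm p \<theta>) (1\<^sub>m q) + kron (1\<^sub>m p) (Dm q \<phi>)"
  have p0: "p > 0" and q0: "q > 0" using p q by auto
  have K3: "kron (Dm p \<theta>) (1\<^sub>m q) \<in> carrier_mat (p*q) (p*q)" by (rule kron_carrier) auto
  have K4: "kron (1\<^sub>m p) (Dm q \<phi>) \<in> carrier_mat (p*q) (p*q)" by (rule kron_carrier) auto
  have Dc: "D \<in> carrier_mat (p*q) (p*q)" unfolding D_def using K3 K4 by simp
  have Dent: "D $$ (i,k) = (if i = k then complex_of_real (Fv p q \<theta> \<phi> i) else 0)"
    if i: "i < p*q" and k: "k < p*q" for i k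
  proof -
    have "D $$ (i,k) = Dm p \<theta> $$ (i div q, k div q) * (1\<^sub>m q) $$ (i mod q, k mod q)
       + (1\<^sub>m p) $$ (i div q, k div q) * Dm q \<phi> $$ (i mod q, k mod q)"
      unfolding D_def using i k K3 K4 by (simp add: kron_def)
    also have "\<dots> = (if i = k then complex_of_real (Fv p q \<theta> \<phi> i) else 0)"
    proof -
      have "(i div q = k div q \<and> i mod q = k mod q) \<longleftrightarrow> i = k" by (metis div_mult_mod_eq)
      then show ?thesis using i k q0 lt_mult_div[OF i] lt_mult_div[OF k]
        by (auto simp: Dm_def Fv_def)
    qed
    finally show ?thesis .
  qed
  have ut: "upper_triangular D"
    unfolding upper_triangular_def using Dc Dent by auto
  have cp: "char_poly (DeltaGamma p q \<theta> \<phi>) = (\<Prod>a\<leftarrow>diag_mat D. [:- a, 1:])"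
    using char_poly_similar[OF DG_similar[OF p q, of \<theta> \<phi>]] char_poly_upper_triangular[OF Dc ut]
    unfolding D_def by simp
  have dm: "diag_mat D = map (\<lambda>i. complex_of_real (Fv p q \<theta> \<phi> i)) [0..<p*q]"
    unfolding diag_mat_def using Dc Dent by auto
  have "proots (char_poly (DeltaGamma p q \<theta> \<phi>)) = (\<Sum>a\<leftarrow>diag_mat D. proots [:- a, 1:])"
  proof -
    have "0 \<notin> (\<lambda>a. [:- a, 1:]) ` set (diag_mat D)"
    proof
      assume "0 \<in> (\<lambda>a. [:- a, 1:]) ` set (diag_mat D)"
      then obtain a where "(0::complex poly) = [:- a, 1:]" by blast
      then have "coeff (0::complex poly) 1 = coeff [:- a, 1:] 1" by simp
      then show False by simp
    qed
    then show ?thesis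
      unfolding cp using proots_prod_list[of "map (\<lambda>a. [:- a, 1:]) (diag_mat D)"]
      by (simp add: o_def)
  qed
  also have "\<dots> = (\<Sum>a\<leftarrow>diag_mat D. {#a#})" by simp
  also have "\<dots> = mset (diag_mat D)" by (rule sum_list_singletons)
  finally have "image_mset Re (proots (char_poly (DeltaGamma p q \<theta> \<phi>))) = mset (map (Fv p q \<theta> \<phi>) [0..<p*q])"
    unfolding dm by (simp add: o_def image_mset.compositionality)
  then show ?thesis
    unfolding lam_def eigs_def kth_def by simp
qed




lemma invol_even:
  assumes "finite B" "\<And>x. x \<in> B \<Longrightarrow> f x \<in> B" "\<And>x. x \<in> B \<Longrightarrow> f (f x) = x" "\<And>x. x \<in> B \<Longrightarrow> f x \<noteq> x"
  shows "even (card B)"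
  using assms
proof (induction "card B" arbitrary: B rule: less_induct)
  case less
  show ?case
  proof (cases "B = {}")
    case True then show ?thesis by simp
  next
    case False
    then obtain x where x: "x \<in> B" by blast
    define B' where "B' = B - {x, f x}"
    have fx: "f x \<in> B" "f x \<noteq> x" using less.prems x by auto
    have cB: "card B = card B' + 2"
    proof -
      have "card B' = card B - card {x, f x}" unfolding B'_def
        using less.prems(1) x fx by (intro card_Diff_subset) auto
      moreover have "card {x, f x} = 2" using fx by simp
      moreover have "card {x, f x} \<le> card B" using less.prems(1) x fx by (intro card_mono) auto
      ultimately show ?thesis by simp
    qed
    have "even (card B')"
    proof (rule less.hyps)
      show "card B' < card B" using cB by simp
      show "finite B'" unfolding B'_def using less.prems by simp
      fix y assume y: "y \<in> B'"
      then have yB: "y \<in> B" "y \<noteq> x" "y \<noteq> f x" unfolding B'_def by auto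
      show "f (f y) = y" using less.prems yB by auto
      show "f y \<noteq> y" using less.prems yB by auto
      show "f y \<in> B'"
      proof -
        have ffy: "f (f y) = y" using less.prems(3) yB(1) by blast
        have "f y \<noteq> x"
        proof
          assume "f y = x" then have "f (f y) = f x" by simp
          then show False using ffy yB by simp
        qed
        moreover have "f y \<noteq> f x"
        proof
          assume "f y = f x" then have "f (f y) = f (f x)" by simp
          then show False using ffy yB less.prems(3) x by simp
        qed
        ultimately show ?thesis unfolding B'_def using less.prems(2) yB by auto
      qed
    qed
    then show ?thesis using cB by simp
  qed
qed

lemma invol_odd:
  assumes "finite A" "\<And>x. x \<in> A \<Longrightarrow> f x \<in> A" "\<And>x. x \<in> A \<Longrightarrow> f (f x) = x"
    and "a \<in> A" "f a = a" "\<And>x. x \<in> A \<Longrightarrow> f x = x \<Longrightarrow> x = a"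
  shows "odd (card A)"
proof -
  have "even (card (A - {a}))"
  proof (rule invol_even)
    show "finite (A - {a})" using assms(1) by simp
    fix x assume x: "x \<in> A - {a}"
    show "f (f x) = x" using x assms(3) by auto
    show "f x \<noteq> x" using x assms(6) by auto
    have "f x \<noteq> a"
    proof
      assume "f x = a" then have "f (f x) = f a" by simp
      then show False using x assms(3,5) by auto
    qed
    then show "f x \<in> A - {a}" using x assms(2) by auto
  qed
  moreover have "card A = card (A - {a}) + 1" using assms(1,4) card_Suc_Diff1[of A a] by simp
  ultimately show ?thesis by simp
qed

lemma idx_lt: "a < p \<Longrightarrow> b < q \<Longrightarrow> a*q + b < p*(q::nat)"
proof -
  assume a: "a < p" and b: "b < q"
  have "a*q+b < a*q+q" using b by simp
  also have "a*q + q = (a+1)*q" by simp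
  also have "\<dots> \<le> p*q" using a by (intro mult_right_mono) auto
  finally show ?thesis .
qed

definition sig :: "nat \<Rightarrow> nat \<Rightarrow> nat \<Rightarrow> real" where
  "sig p q i = (2 * real (i div q) + 1) * pi / real p + 2 * pi * real (i mod q) / real q"

definition iota :: "nat \<Rightarrow> nat \<Rightarrow> nat \<Rightarrow> nat" where
  "iota p q i = (p - 1 - i div q) * q + (q - i mod q) mod q"

lemma card_A_odd:
  fixes p q :: nat
  assumes p: "odd p" and q: "q > 0"
  shows "odd (card {i. i < p*q \<and> cos (sig p q i / 2) = 0})"
proof -
  let ?A = "{i. i < p*q \<and> cos (sig p q i / 2) = 0}"
  have p0: "p > 0" using p by (cases p) auto
  have io_div: "iota p q i div q = p - 1 - i div q" and io_mod: "iota p q i mod q = (q - i mod q) mod q" for i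
    unfolding iota_def using q by auto
  have io_lt: "iota p q i < p*q" if "i < p*q" for i
    unfolding iota_def using q p0 by (intro idx_lt) auto
  have mm: "(q - (q - l) mod q) mod q = l" if "l < q" for l
  proof (cases "l = 0")
    case True then show ?thesis by simp
  next
    case False then show ?thesis using that by simp
  qed
  have io_io: "iota p q (iota p q i) = i" if i: "i < p*q" for i
  proof -
    have k: "i div q < p" using lt_mult_div[OF i] .
    have "iota p q (iota p q i) = (p - 1 - (p - 1 - i div q)) * q + (q - (q - i mod q) mod q) mod q"
      unfolding iota_def[of p q "iota p q i"] io_div io_mod ..
    also have "\<dots> = (i div q) * q + i mod q" using k mm[of "i mod q"] q by simp
    also have "\<dots> = i" by simp
    finally show ?thesis .
  qed
  have sig_io: "cos (sig p q (iota p q i) / 2) = 0 \<longleftrightarrow> cos (sig p q i / 2) = 0" if i: "i < p*q" for i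
  proof -
    have k: "i div q < p" using lt_mult_div[OF i] .
    have rk: "real (p - 1 - i div q) = real p - 1 - real (i div q)" using k by (simp add: of_nat_diff)
    show ?thesis
    proof (cases "i mod q = 0")
      case True
      have e: "sig p q (iota p q i) / 2 = pi - sig p q i / 2"
        unfolding sig_def io_div io_mod using True rk p0 by (simp add: field_simps)
      have "cos (sig p q (iota p q i) / 2) = - cos (sig p q i / 2)" by (subst e) (simp add: cos_diff)
      then show ?thesis by simp
    next
      case False
      have l: "i mod q < q" using q by simp
      have rl: "real ((q - i mod q) mod q) = real q - real (i mod q)"
        using False l by (simp add: of_nat_diff)
      have e: "sig p q (iota p q i) / 2 = 2 * pi - sig p q i / 2"
        unfolding sig_def io_div io_mod rl using rk p0 q by (simp add: field_simps)
      have "cos (sig p q (iota p q i) / 2) = cos (sig p q i / 2)" by (subst e) (simp add: cos_diff)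
      then show ?thesis by simp
    qed
  qed
  define a where "a = ((p - 1) div 2) * q"
  have a_div: "a div q = (p-1) div 2" and a_mod: "a mod q = 0" unfolding a_def using q by auto
  have p2: "2 * ((p - 1) div 2) + 1 = p" using p by presburger
  have a_sig: "sig p q a = pi"
  proof -
    have "real (2 * ((p - 1) div 2) + 1) = real p" using p2 by simp
    then have "2 * real ((p - 1) div 2) + 1 = real p" by simp
    then show ?thesis unfolding sig_def a_div a_mod using p0 by simp
  qed
  show ?thesis
  proof (rule invol_odd[where f = "iota p q" and a = a])
    show "finite ?A" by simp
    fix x assume x: "x \<in> ?A"
    then show "iota p q x \<in> ?A" using io_lt sig_io by auto
    show "iota p q (iota p q x) = x" using x io_io by auto
  next
    show "a \<in> ?A" using a_sig idx_lt[of "(p-1) div 2" p 0 q] p0 q by (simp add: a_def)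
    have h: "p - 1 - (p - 1) div 2 = (p - 1) div 2" using p2 by linarith
    show "iota p q a = a" unfolding iota_def a_div a_mod h by (simp add: a_def)
  next
    fix x assume x: "x \<in> ?A" and fx: "iota p q x = x"
    have k: "x div q < p" using x lt_mult_div by auto
    have l: "x mod q < q" using q by simp
    have e1: "p - 1 - x div q = x div q" using fx io_div[of x] by simp
    have e2: "(q - x mod q) mod q = x mod q" using fx io_mod[of x] by simp
    have kk: "x div q = (p - 1) div 2" using e1 k by linarith
    have "x mod q = 0"
    proof (rule ccontr)
      assume l0: "x mod q \<noteq> 0"
      then have "q - x mod q = x mod q" using e2 l by simp
      then have ql: "real q = 2 * real (x mod q)" by linarith
      have "real (2 * (x div q) + 1) = real p" using kk p2 by simp
      then have rk: "2 * real (x div q) + 1 = real p" by simp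
      have "sig p q x = 2 * pi" unfolding sig_def rk ql using p0 l0 by (simp add: field_simps)
      then show False using x by simp
    qed
    then show "x = a" unfolding a_def using kk by (metis div_mult_mod_eq add_0_right)
  qed
qed




definition gam :: "nat \<Rightarrow> nat \<Rightarrow> nat \<Rightarrow> real" where
  "gam p q i = ((2 * real (i div q) + 1) * pi / real p - 2 * pi * real (i mod q) / real q) / 2"

lemma Fv_shift:
  assumes p: "p > 0" and q: "q > 0"
  shows "Fv p q (pi - real p * t + s) (real q * t) i
     = 4 * cos (sig p q i / 2 + s / (2 * real p)) * cos (gam p q i - t + s / (2 * real p))"
proof -
  define w where "w = alph p (pi - real p * t + s) (i div q)"
  define z where "z = alph q (real q * t) (i mod q)"
  have "Fv p q (pi - real p * t + s) (real q * t) i = 2 * (cos w + cos z)"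
    unfolding Fv_def w_def z_def by simp
  also have "\<dots> = 4 * cos ((w + z) / 2) * cos ((w - z) / 2)" by (simp add: cos_plus_cos)
  also have "(w + z) / 2 = sig p q i / 2 + s / (2 * real p)"
    unfolding w_def z_def alph_def sig_def using p q by (simp add: field_simps)
  also have "(w - z) / 2 = gam p q i - t + s / (2 * real p)"
    unfolding w_def z_def alph_def gam_def using p q by (simp add: field_simps)
  finally show ?thesis .
qed

lemma cos_prod_pm: fixes a u :: real shows "cos (a + u) * cos (a - u) = cos a ^ 2 - sin u ^ 2"
proof -
  have c1: "cos (a + u) = cos a * cos u - sin a * sin u" by (rule cos_add)
  have c2: "cos (a - u) = cos a * cos u + sin a * sin u" by (rule cos_diff)
  have "cos (a + u) * cos (a - u) = (cos a * cos u) ^ 2 - (sin a * sin u) ^ 2"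
    unfolding c1 c2 by (simp add: power2_eq_square algebra_simps)
  also have "\<dots> = cos a ^ 2 * (1 - sin u ^ 2) - (1 - cos a ^ 2) * sin u ^ 2"
  proof -
    have s1: "sin a ^ 2 = 1 - cos a ^ 2" by (rule sin_squared_eq)
    have s2: "cos u ^ 2 = 1 - sin u ^ 2" by (rule cos_squared_eq)
    show ?thesis unfolding power_mult_distrib s1 s2 ..
  qed
  also have "\<dots> = cos a ^ 2 - sin u ^ 2" by (simp add: algebra_simps)
  finally show ?thesis .
qed

lemma card_sign_count:
  fixes a b :: "nat \<Rightarrow> real"
  assumes fin: "finite I" and nz: "\<And>i. i \<in> I \<Longrightarrow> a i * b i \<noteq> 0"
  shows "card {i\<in>I. a i < 0} + card {i\<in>I. b i < 0} = card {i\<in>I. a i * b i < 0} + 2 * card {i\<in>I. a i < 0 \<and> b i < 0}"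
proof -
  let ?S1 = "{i\<in>I. a i < 0}" and ?S2 = "{i\<in>I. b i < 0}" and ?A = "{i\<in>I. a i * b i < 0}"
  have "card ?S1 + card ?S2 = card (?S1 \<union> ?S2) + card (?S1 \<inter> ?S2)"
    by (rule card_Un_Int) (use fin in auto)
  moreover have "?S1 \<union> ?S2 = ?A \<union> (?S1 \<inter> ?S2)"
  proof -
    have nz': "a i \<noteq> 0 \<and> b i \<noteq> 0" if "i \<in> I" for i using nz[OF that] by auto
    show ?thesis by (auto simp: mult_less_0_iff dest: nz')
  qed
  moreover have "card (?A \<union> (?S1 \<inter> ?S2)) = card ?A + card (?S1 \<inter> ?S2)"
    by (rule card_Un_disjoint) (use fin in \<open>auto simp: mult_less_0_iff\<close>)
  moreover have "?S1 \<inter> ?S2 = {i\<in>I. a i < 0 \<and> b i < 0}" by auto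
  ultimately show ?thesis by simp
qed

lemma choose_t:
  fixes p q :: nat
  assumes p: "p > 0" and q: "q > 0"
  shows "\<exists>t. 0 < t \<and> t < pi / real p \<and> t < pi / real q \<and> (\<forall>i<p*q. cos (gam p q i - t) \<noteq> 0)"
proof -
  define c where "c = min (pi / real p) (pi / real q)"
  have c0: "0 < c" unfolding c_def using p q by simp
  define bad where "bad = (\<Union>i\<in>{..<p*q}. {t. cos (gam p q i - t) = 0})"
  have "countable bad"
    unfolding bad_def
  proof (rule countable_UN)
    show "countable {..<p*q}" by simp
    fix i
    have "{t. cos (gam p q i - t) = 0} \<subseteq> (\<lambda>k::int. gam p q i - of_int k * (pi/2)) ` UNIV"
    proof
      fix t assume "t \<in> {t. cos (gam p q i - t) = 0}"
      then obtain k where "odd k" "gam p q i - t = of_int k * (pi/2)" using cos_zero_iff_int by auto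
      then have "t = gam p q i - of_int k * (pi/2)" by linarith
      then show "t \<in> (\<lambda>k::int. gam p q i - of_int k * (pi/2)) ` UNIV" by (rule range_eqI)
    qed
    then show "countable {t. cos (gam p q i - t) = 0}"
      by (rule countable_subset) simp
  qed
  moreover have "uncountable {0<..<c}" using c0 by (simp add: uncountable_open_interval)
  ultimately have "\<not> {0<..<c} \<subseteq> bad" using countable_subset by blast
  then obtain t where t: "t \<in> {0<..<c}" "t \<notin> bad" by blast
  then show ?thesis unfolding bad_def c_def by auto
qed




lemma crossing:
  fixes p q :: nat assumes p: "odd p" and q: "q > 0"
  shows "\<exists>x1 x2. x1 \<in> {0..pi}\<times>{0..pi} \<and> x2 \<in> {0..pi}\<times>{0..pi} \<and>
    (\<forall>i<p*q. Fv p q (fst x1) (snd x1) i \<noteq> 0 \<and> Fv p q (fst x2) (snd x2) i \<noteq> 0) \<and>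
    card {i. i<p*q \<and> Fv p q (fst x1) (snd x1) i < 0} \<noteq> card {i. i<p*q \<and> Fv p q (fst x2) (snd x2) i < 0}"
proof -
  have p0: "p > 0" using p by (cases p) auto
  obtain t where t0: "0 < t" and tp: "t < pi / real p" and tq: "t < pi / real q"
    and tc: "\<And>i. i < p*q \<Longrightarrow> cos (gam p q i - t) \<noteq> 0"
    using choose_t[OF p0 q] by blast
  have ptp: "real p * t < pi" using tp p0 by (simp add: field_simps)
  have qtp: "real q * t < pi" using tq q by (simp add: field_simps)
  define b where "b = min 1 (min (t/2) ((pi - real p * t) / (2 * real p)))"
  have b0: "0 < b" unfolding b_def using t0 ptp p0 by simp
  have lim: "((\<lambda>u. sin u ^ 2) \<longlongrightarrow> 0) (at_right (0::real))"
  proof -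
    have "((\<lambda>u. sin u ^ 2) \<longlongrightarrow> sin 0 ^ 2) (at_right (0::real))"
      by (intro tendsto_intros)
    then show ?thesis by simp
  qed
  have evi: "\<forall>\<^sub>F u in at_right 0. sin u ^ 2 < cos (gam p q i - t) ^ 2 \<and>
      (cos (sig p q i / 2) \<noteq> 0 \<longrightarrow> sin u ^ 2 < cos (sig p q i / 2) ^ 2)" if i: "i < p*q" for i
  proof (rule eventually_conj)
    show "\<forall>\<^sub>F u in at_right 0. sin u ^ 2 < cos (gam p q i - t) ^ 2"
      by (rule order_tendstoD(2)[OF lim]) (use tc[OF i] in simp)
    show "\<forall>\<^sub>F u in at_right 0. cos (sig p q i / 2) \<noteq> 0 \<longrightarrow> sin u ^ 2 < cos (sig p q i / 2) ^ 2"
    proof (cases "cos (sig p q i / 2) = 0")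
      case True then show ?thesis by simp
    next
      case False
      have "\<forall>\<^sub>F u in at_right 0. sin u ^ 2 < cos (sig p q i / 2) ^ 2"
        by (rule order_tendstoD(2)[OF lim]) (use False in simp)
      then show ?thesis by (rule eventually_mono) simp
    qed
  qed
  have ev: "\<forall>\<^sub>F u in at_right 0. u \<in> {0<..<b} \<and> (\<forall>i\<in>{..<p*q}. sin u ^ 2 < cos (gam p q i - t) ^ 2 \<and>
      (cos (sig p q i / 2) \<noteq> 0 \<longrightarrow> sin u ^ 2 < cos (sig p q i / 2) ^ 2))"
    by (intro eventually_conj eventually_at_right_real[OF b0] eventually_ball_finite) (use evi in auto)
  obtain u where u: "u \<in> {0<..<b}" and ui: "\<And>i. i < p*q \<Longrightarrow> sin u ^ 2 < cos (gam p q i - t) ^ 2 \<and>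
      (cos (sig p q i / 2) \<noteq> 0 \<longrightarrow> sin u ^ 2 < cos (sig p q i / 2) ^ 2)"
    using eventually_happens'[OF _ ev] by auto
  have u0: "0 < u" and u1: "u < 1" and ut: "u < t/2" and up: "u < (pi - real p * t) / (2 * real p)"
    using u unfolding b_def by auto
  have su: "sin u > 0" using u0 u1 pi_gt3 by (intro sin_gt_zero) auto
  define x1 where "x1 = (pi - real p * t + 2 * real p * u, real q * t)"
  define x2 where "x2 = (pi - real p * t + - (2 * real p * u), real q * t)"
  have up': "2 * real p * u < pi - real p * t" using up p0 by (simp add: field_simps)
  have ut': "2 * real p * u < real p * t" using ut p0 by simp
  have pu: "0 \<le> 2 * real p * u" "0 \<le> real p * t" using u0 t0 by auto
  have a1: "0 \<le> pi - real p * t + 2 * real p * u" "pi - real p * t + 2 * real p * u \<le> pi"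
    using ptp pu ut' by linarith+
  have a3: "0 \<le> pi - real p * t + - (2 * real p * u)" "pi - real p * t + - (2 * real p * u) \<le> pi"
    using up' pu by linarith+
  have a2: "0 \<le> real q * t" "real q * t \<le> pi" using t0 qtp by auto
  have x1X: "x1 \<in> {0..pi}\<times>{0..pi}" unfolding x1_def using a1 a2 by (simp only: mem_Times_iff atLeastAtMost_iff fst_conv snd_conv) 
  have x2X: "x2 \<in> {0..pi}\<times>{0..pi}" unfolding x2_def using a3 a2 by (simp only: mem_Times_iff atLeastAtMost_iff fst_conv snd_conv)
  define F1 where "F1 i = Fv p q (fst x1) (snd x1) i" for i
  define F2 where "F2 i = Fv p q (fst x2) (snd x2) i" for i
  have prod: "F1 i * F2 i = 16 * (cos (sig p q i / 2) ^ 2 - sin u ^ 2) * (cos (gam p q i - t) ^ 2 - sin u ^ 2)" for i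
  proof -
    have d1: "2 * real p * u / (2 * real p) = u" using p0 by simp
    have d2: "- (2 * real p * u) / (2 * real p) = - u" using p0 by simp
    have "F1 i = 4 * cos (sig p q i / 2 + u) * cos (gam p q i - t + u)"
      unfolding F1_def x1_def using Fv_shift[OF p0 q, of t "2 * real p * u" i] d1 by simp
    moreover have "F2 i = 4 * cos (sig p q i / 2 - u) * cos (gam p q i - t - u)"
      unfolding F2_def x2_def using Fv_shift[OF p0 q, of t "- (2 * real p * u)" i] d2 by simp
    ultimately have "F1 i * F2 i = 16 * (cos (sig p q i / 2 + u) * cos (sig p q i / 2 - u)) * (cos (gam p q i - t + u) * cos (gam p q i - t - u))"
      by (simp add: algebra_simps)
    then show ?thesis by (simp only: cos_prod_pm)
  qed
  have sgn: "F1 i * F2 i < 0 \<longleftrightarrow> cos (sig p q i / 2) = 0" and nz: "F1 i * F2 i \<noteq> 0" if i: "i < p*q" for i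
  proof -
    have g: "cos (gam p q i - t) ^ 2 - sin u ^ 2 > 0" using ui[OF i] by simp
    have s2: "sin u ^ 2 > 0" using su by simp
    show "F1 i * F2 i < 0 \<longleftrightarrow> cos (sig p q i / 2) = 0"
    proof (cases "cos (sig p q i / 2) = 0")
      case True
      then show ?thesis unfolding prod using g s2 by (simp add: mult_pos_neg mult_neg_pos)
    next
      case False
      then have "cos (sig p q i / 2) ^ 2 - sin u ^ 2 > 0" using ui[OF i] by simp
      then have P: "0 < 16 * (cos (sig p q i / 2) ^ 2 - sin u ^ 2) * (cos (gam p q i - t) ^ 2 - sin u ^ 2)"
        using g by (intro mult_pos_pos) auto
      have "\<not> F1 i * F2 i < 0" unfolding prod using P by linarith
      then show ?thesis using False by simp
    qed
    show "F1 i * F2 i \<noteq> 0"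
    proof (cases "cos (sig p q i / 2) = 0")
      case True
      then show ?thesis unfolding prod using g s2 by simp
    next
      case False
      then have "cos (sig p q i / 2) ^ 2 - sin u ^ 2 > 0" using ui[OF i] by simp
      then show ?thesis unfolding prod using g by simp
    qed
  qed
  have cnt: "card {i\<in>{..<p*q}. F1 i < 0} + card {i\<in>{..<p*q}. F2 i < 0} =
     card {i\<in>{..<p*q}. F1 i * F2 i < 0} + 2 * card {i\<in>{..<p*q}. F1 i < 0 \<and> F2 i < 0}"
    by (rule card_sign_count) (use nz in auto)
  have "{i\<in>{..<p*q}. F1 i * F2 i < 0} = {i. i < p*q \<and> cos (sig p q i / 2) = 0}"
    using sgn by auto
  then have oddA: "odd (card {i\<in>{..<p*q}. F1 i * F2 i < 0})" using card_A_odd[OF p q] by simp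
  have e1: "{i\<in>{..<p*q}. F1 i < 0} = {i. i<p*q \<and> Fv p q (fst x1) (snd x1) i < 0}" unfolding F1_def by auto
  have e2: "{i\<in>{..<p*q}. F2 i < 0} = {i. i<p*q \<and> Fv p q (fst x2) (snd x2) i < 0}" unfolding F2_def by auto
  have neq: "card {i. i<p*q \<and> Fv p q (fst x1) (snd x1) i < 0} \<noteq> card {i. i<p*q \<and> Fv p q (fst x2) (snd x2) i < 0}"
  proof
    assume eq: "card {i. i<p*q \<and> Fv p q (fst x1) (snd x1) i < 0} = card {i. i<p*q \<and> Fv p q (fst x2) (snd x2) i < 0}"
    have eqc: "card {i\<in>{..<p*q}. F1 i < 0} = card {i\<in>{..<p*q}. F2 i < 0}"
      unfolding e1 e2 eq ..
    define a1 where "a1 = card {i\<in>{..<p*q}. F1 i < 0}"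
    define a2 where "a2 = card {i\<in>{..<p*q}. F2 i < 0}"
    define a3 where "a3 = card {i\<in>{..<p*q}. F1 i * F2 i < 0}"
    define a4 where "a4 = card {i\<in>{..<p*q}. F1 i < 0 \<and> F2 i < 0}"
    have "a1 = a2" "a1 + a2 = a3 + 2 * a4" "odd a3"
      using eqc cnt oddA unfolding a1_def a2_def a3_def a4_def by auto
    then show False by presburger
  qed
  have nzall: "\<forall>i<p*q. Fv p q (fst x1) (snd x1) i \<noteq> 0 \<and> Fv p q (fst x2) (snd x2) i \<noteq> 0"
    using nz unfolding F1_def F2_def by auto
  show ?thesis using x1X x2X nzall neq by blast
qed




lemma size_filter_upt:
  "size (filter_mset P (image_mset F (mset [0..<n]))) = card {i. i < n \<and> P (F i)}"
proof -
  have "size (filter_mset P (image_mset F (mset [0..<n]))) = size (filter_mset (\<lambda>i. P (F i)) (mset [0..<n]))"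
    by (simp add: filter_mset_image_mset)
  also have "\<dots> = length (filter (\<lambda>i. P (F i)) [0..<n])"
    by (simp only: mset_filter[symmetric] size_mset)
  also have "\<dots> = card {i. i < n \<and> P (F ([0..<n] ! i))}"
    by (simp add: length_filter_conv_card)
  also have "{i. i < n \<and> P (F ([0..<n] ! i))} = {i. i < n \<and> P (F i)}" by auto
  finally show ?thesis .
qed

lemma main_step:
  fixes p q :: nat
  assumes p: "p = 1 \<or> 3 \<le> p" and q: "q = 1 \<or> 3 \<le> q"
    and x1: "x1 \<in> {0..pi}\<times>{0..pi}" and x2: "x2 \<in> {0..pi}\<times>{0..pi}"
    and nz: "\<And>i. i < p*q \<Longrightarrow> Fv p q (fst x1) (snd x1) i \<noteq> 0"
    and lt: "card {i. i<p*q \<and> Fv p q (fst x1) (snd x1) i < 0} < card {i. i<p*q \<and> Fv p q (fst x2) (snd x2) i < 0}"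
  shows "\<exists>j. 1 \<le> j \<and> j \<le> p * q \<and> (0::real) \<in> interior (band p q j)"
proof -
  define n where "n = p * q"
  define N1 where "N1 = card {i. i<p*q \<and> Fv p q (fst x1) (snd x1) i < 0}"
  define N2 where "N2 = card {i. i<p*q \<and> Fv p q (fst x2) (snd x2) i < 0}"
  define j where "j = N2"
  define M where "M x = image_mset (\<lambda>i. Fv p q (fst x) (snd x) i) (mset [0..<n])" for x :: "real \<times> real"
  have sizeM: "size (M x) = n" for x unfolding M_def by simp
  have lamM: "lam p q j (fst x) (snd x) = kth (M x) (j - 1)" for x
    unfolding M_def n_def using lam_formula[OF p q] by simp
  have N2n: "N2 \<le> n" unfolding N2_def n_def
    by (rule order_trans[OF card_mono[of "{..<p*q}"]]) auto
  have j1: "1 \<le> j" using lt unfolding j_def N1_def N2_def by simp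
  have jn: "j \<le> p * q" using N2n unfolding j_def n_def by simp
  have jj: "j - 1 < n" using j1 jn unfolding n_def by simp
  have neg: "lam p q j (fst x2) (snd x2) < 0"
  proof -
    have "size (filter_mset (\<lambda>x. x < 0) (M x2)) = N2"
      unfolding M_def N2_def n_def by (rule size_filter_upt)
    then show ?thesis unfolding lamM using kth_less_iff[of "j-1" "M x2" 0] jj sizeM j1
      unfolding j_def by simp
  qed
  have pos: "lam p q j (fst x1) (snd x1) > 0"
  proof -
    have "size (filter_mset (\<lambda>x. x \<le> 0) (M x1)) = card {i. i<n \<and> Fv p q (fst x1) (snd x1) i \<le> 0}"
      unfolding M_def by (rule size_filter_upt)
    also have "{i. i<n \<and> Fv p q (fst x1) (snd x1) i \<le> 0} = {i. i<p*q \<and> Fv p q (fst x1) (snd x1) i < 0}"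
      using nz unfolding n_def by force
    finally have "size (filter_mset (\<lambda>x. x \<le> 0) (M x1)) = N1" unfolding N1_def .
    then have "\<not> kth (M x1) (j - 1) \<le> 0"
      using kth_le_iff[of "j-1" "M x1" 0] jj sizeM lt j1 unfolding j_def N1_def N2_def by simp
    then show ?thesis unfolding lamM by simp
  qed
  have cont: "continuous_on ({0..pi}\<times>{0..pi}) (\<lambda>(\<theta>, \<phi>). lam p q j \<theta> \<phi>)"
  proof -
    have eqf: "(\<lambda>(\<theta>, \<phi>). lam p q j \<theta> \<phi>) = (\<lambda>x. kth (image_mset (\<lambda>i. Fv p q (fst x) (snd x) i) (mset [0..<n])) (j - 1))"
      using lamM unfolding M_def by (auto simp: fun_eq_iff)
    have "continuous_on ({0..pi}\<times>{0..pi}) (\<lambda>x. kth (image_mset (\<lambda>i. Fv p q (fst x) (snd x) i) (mset [0..<n])) (j - 1))"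
    proof (rule kth_continuous_on)
      show "j - 1 < size (mset [0..<n])" using jj by simp
      fix i
      have p0: "real p \<noteq> 0" and q0: "real q \<noteq> 0" using p q by auto
      show "continuous_on ({0..pi}\<times>{0..pi}) (\<lambda>x. Fv p q (fst x) (snd x) i)"
        unfolding Fv_def alph_def using p0 q0 by (intro continuous_intros) auto
    qed
    then show ?thesis unfolding eqf .
  qed
  have conn: "connected (band p q j)"
    unfolding band_def
    by (rule connected_continuous_image[OF cont]) (intro convex_connected convex_Times convex_real_interval)
  have in1: "lam p q j (fst x1) (snd x1) \<in> band p q j"
    unfolding band_def using x1 by (auto intro!: image_eqI[of _ _ x1])
  have in2: "lam p q j (fst x2) (snd x2) \<in> band p q j"
    unfolding band_def using x2 by (auto intro!: image_eqI[of _ _ x2])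
  have sub: "{lam p q j (fst x2) (snd x2) .. lam p q j (fst x1) (snd x1)} \<subseteq> band p q j"
    by (rule connected_contains_Icc[OF conn in2 in1])
  have "(0::real) \<in> interior {lam p q j (fst x2) (snd x2) .. lam p q j (fst x1) (snd x1)}"
    using neg pos by simp
  then have "(0::real) \<in> interior (band p q j)" using interior_mono[OF sub] by blast
  then show ?thesis using j1 jn by blast
qed

theorem proposition3p4:
  fixes p q :: nat
  assumes "odd p" and "4 dvd q" and "q > 0"
  shows "\<exists>j. 1 \<le> j \<and> j \<le> p * q \<and> (0::real) \<in> interior (band p q j)"
proof -
  have p: "p = 1 \<or> 3 \<le> p" using assms(1) by presburger
  have q: "q = 1 \<or> 3 \<le> q" using assms(2,3) by (auto dest: dvd_imp_le)
  obtain x1 x2 where x1: "x1 \<in> {0..pi}\<times>{0..pi}" and x2: "x2 \<in> {0..pi}\<times>{0..pi}"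
    and nz: "\<forall>i<p*q. Fv p q (fst x1) (snd x1) i \<noteq> 0 \<and> Fv p q (fst x2) (snd x2) i \<noteq> 0"
    and ne: "card {i. i<p*q \<and> Fv p q (fst x1) (snd x1) i < 0} \<noteq> card {i. i<p*q \<and> Fv p q (fst x2) (snd x2) i < 0}"
    using crossing[OF assms(1) assms(3)] by blast
  show ?thesis
  proof (cases "card {i. i<p*q \<and> Fv p q (fst x1) (snd x1) i < 0} < card {i. i<p*q \<and> Fv p q (fst x2) (snd x2) i < 0}")
    case True
    show ?thesis by (rule main_step[OF p q x1 x2 _ True]) (use nz in auto)
  next
    case False
    then have lt: "card {i. i<p*q \<and> Fv p q (fst x2) (snd x2) i < 0} < card {i. i<p*q \<and> Fv p q (fst x1) (snd x1) i < 0}"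
      using ne by simp
    show ?thesis by (rule main_step[OF p q x2 x1 _ lt]) (use nz in auto)
  qed
qed


end
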